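(* Let $c\ge 0$ and let $(f_p)_{p\ge1}$ be real numbers with $f_1=0$ and $$f_p\le c+\frac{1}{p(p-1)}\sum_{k=1}^{p-1}k f_k\quad\text{for all } p\ge 2.$$ Then $f_p\le 2c$ for all $p\ge 1$. *)

theory Defs
  imports Complex_Main
begin

end

theory Submission
  imports Defs
begin

lemma gsum: "(\<Sum>k=1..n. real k) = real n * (real n + 1) / 2"
  by (induction n) (auto simp: field_simps)

theorem lemma2p3:
  fixes c :: real and f :: "nat \<Rightarrow> real"
  assumes "c \<ge> 0"
    and "f 1 = 0"
    and "\<And>p. p \<ge> 2 \<Longrightarrow>
           f p \<le> c + (1 / (real p * (real p - 1))) * (\<Sum>k=1..p-1. real k * f k)"
  shows "\<forall>p\<ge>1. f p \<le> 2 * c"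
proof (intro allI impI)
  fix p :: nat assume "p \<ge> 1"
  then show "f p \<le> 2 * c"
  proof (induction p rule: less_induct)
    case (less p)
    show ?case
    proof (cases "p = 1")
      case True then show ?thesis using assms by simp
    next
      case False
      then have p2: "p \<ge> 2" using less.prems by simp
      have "(\<Sum>k=1..p-1. real k * f k) \<le> (\<Sum>k=1..p-1. real k * (2*c))"
        by (rule sum_mono) (auto intro!: mult_left_mono less.IH)
      also have "\<dots> = 2 * c * (\<Sum>k=1..p-1. real k)"
        by (simp add: sum_distrib_left mult.commute)
      also have "\<dots> = c * (real p * (real p - 1))"
      proof -
        have "(\<Sum>k=1..p-1. real k) = real (p-1) * (real (p-1) + 1) / 2" by (rule gsum)
        also have "\<dots> = (real p - 1) * real p / 2" using p2 by (simp add: of_nat_diff)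
        finally show ?thesis by (simp add: mult.commute)
      qed
      finally have S: "(\<Sum>k=1..p-1. real k * f k) \<le> c * (real p * (real p - 1))" .
      have pos: "real p * (real p - 1) > 0" using p2 by simp
      have "(1 / (real p * (real p - 1))) * (\<Sum>k=1..p-1. real k * f k) \<le> c"
        using S pos by (simp add: divide_simps mult.commute)
      then show ?thesis using assms(3)[OF p2] by linarith
    qed
  qed
qed

end
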